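(* Let $p=p_1p_2\cdots p_n$ be a permutation avoiding the pattern $1324$, and let $w(p)$ and $z(p)$ be the two words of length $n$ over $\{A,B,C,D\}$ defined in the context. Then for all $i\geq 1$ and all $k\geq 1$: if the $i$th letter $A$ from the right in $w(p)$ is in the middle of a $CAB^k$-factor (i.e., it is immediately preceded by a letter $C$ and immediately followed by $k$ consecutive letters $B$), then the $i$th segment of $z(p)$ from the left contains at least $k$ letters $B$.
   Context: A permutation $p$ avoids $1324$ if there are no indices $i_1<i_2<i_3<i_4$ with $p_{i_1}<p_{i_3}<p_{i_2}<p_{i_4}$. An entry $p_i$ is a left-to-right minimum if it is smaller than all entries to its left, and a right-to-left maximum if it is larger than all entries to its right (these notions are also applied to subsequences). Coloring: scan $p$ from left to right; color $p_i$ blue if coloring it red would create a $132$-pattern consisting entirely of red entries (among the previously colored red entries together with $p_i$); otherwise color $p_i$ red. Then mark each entry with a letter: (1) a red entry that is a left-to-right minimum of the subsequence of red entries gets $A$; (2) a red entry that is not such a left-to-right minimum gets $B$; (3) a blue entry that is not a right-to-left maximum of the subsequence of blue entries gets $C$; (4) a blue entry that is a right-to-left maximum of the subsequence of blue entries gets $D$; (4') finally, every entry that is a right-to-left maximum of all of $p$ but not a left-to-right minimum of $p$ is colored blue and marked $D$, regardless of the earlier rules. The word $w(p)$ has as its $i$th letter the letter of $p_i$; the word $z(p)$ has as its $i$th letter the letter of the entry of value $i$. A segment of a word $v$ over $\{A,B,C,D\}$ is a factor (consecutive letters) that starts with a letter $A$ and ends immediately before the next letter $A$, or at the end of $v$.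 The $i$th segment from the left is the one starting at the $i$th letter $A$ from the left. *)

theory Defs
  imports Main
begin

text \<open>Permutations of [n] are lists p with positions 0..n-1 and values 1..n.\<close>

definition is_perm :: "nat list \<Rightarrow> bool" where
  "is_perm p \<longleftrightarrow> distinct p \<and> set p = {1..length p}"

definition avoids1324 :: "nat list \<Rightarrow> bool" where
  "avoids1324 p \<longleftrightarrow> \<not> (\<exists>a b c d. a < b \<and> b < c \<and> c < d \<and> d < length p \<and>
      p!a < p!c \<and> p!c < p!b \<and> p!b < p!d)"

definition has132 :: "nat list \<Rightarrow> bool" where
  "has132 xs \<longleftrightarrow> (\<exists>a b c. a < b \<and> b < c \<and> c < length xs \<and>
      xs!a < xs!c \<and> xs!c < xs!b)"

text \<open>Colouring scan: the first argument is the list of entries coloured red so far.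
  Result: one Boolean per entry, True = red, False = blue.\<close>
fun red_scan :: "nat list \<Rightarrow> nat list \<Rightarrow> bool list" where
  "red_scan R [] = []"
| "red_scan R (x # xs) =
     (if has132 (R @ [x]) then False # red_scan R xs
      else True # red_scan (R @ [x]) xs)"

definition is_red :: "nat list \<Rightarrow> nat \<Rightarrow> bool" where
  "is_red p i = red_scan [] p ! i"

definition lr_min :: "nat list \<Rightarrow> nat \<Rightarrow> bool" where
  "lr_min p i \<longleftrightarrow> (\<forall>j<i. p!i < p!j)"

definition rl_max :: "nat list \<Rightarrow> nat \<Rightarrow> bool" where
  "rl_max p i \<longleftrightarrow> (\<forall>j. i < j \<and> j < length p \<longrightarrow> p!j < p!i)"

datatype letter = A | B | C | D

definition letter_at :: "nat list \<Rightarrow> nat \<Rightarrow> letter" where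
  "letter_at p i =
     (if rl_max p i \<and> \<not> lr_min p i then D
      else if is_red p i then
        (if (\<forall>j<i. is_red p j \<longrightarrow> p!i < p!j) then A else B)
      else
        (if (\<forall>j. i < j \<and> j < length p \<and> \<not> is_red p j \<longrightarrow> p!j < p!i) then D else C))"

definition w_word :: "nat list \<Rightarrow> letter list" where
  "w_word p = map (letter_at p) [0..<length p]"

definition z_word :: "nat list \<Rightarrow> letter list" where
  "z_word p = map (\<lambda>v. letter_at p (THE j. j < length p \<and> p!j = v)) [1..<length p + 1]"

definition A_positions :: "letter list \<Rightarrow> nat list" where
  "A_positions v = filter (\<lambda>j. v!j = A) [0..<length v]"

definition segment :: "letter list \<Rightarrow> nat \<Rightarrow> letter list" where
  "segment v i =
     (let ps = A_positions v; s = ps ! (i - 1);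
          e = (if i < length ps then ps ! i else length v)
      in take (e - s) (drop s v))"

definition ith_A_from_right :: "letter list \<Rightarrow> nat \<Rightarrow> nat" where
  "ith_A_from_right v i = A_positions v ! (length (A_positions v) - i)"

definition in_CABk :: "letter list \<Rightarrow> nat \<Rightarrow> nat \<Rightarrow> bool" where
  "in_CABk v q k \<longleftrightarrow> 1 \<le> q \<and> q + k < length v \<and> v!(q-1) = C \<and> v!q = A \<and>
      (\<forall>t. 1 \<le> t \<and> t \<le> k \<longrightarrow> v!(q+t) = B)"

end

theory Submission
  imports Defs
begin

lemma red_scan_len[simp]: "length (red_scan R xs) = length xs"
  by (induction xs arbitrary: R) auto

lemma red_scan_nth:
  "j < length xs \<Longrightarrow> red_scan R xs ! j =
     (\<not> has132 (R @ map fst (filter snd (zip (take j xs) (red_scan R xs))) @ [xs!j]))"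
proof (induction xs arbitrary: R j)
  case Nil then show ?case by simp
next
  case (Cons x xs)
  show ?case
  proof (cases j)
    case 0 then show ?thesis by simp
  next
    case (Suc j')
    with Cons.prems have j': "j' < length xs" by simp
    show ?thesis
    proof (cases "has132 (R @ [x])")
      case True
      then show ?thesis using Cons.IH[OF j', of R] Suc by simp
    next
      case False
      then show ?thesis using Cons.IH[OF j', of "R @ [x]"] Suc by simp
    qed
  qed
qed

lemma zip_red: "j \<le> length p \<Longrightarrow>
  zip (take j p) (red_scan [] p) = map (\<lambda>i. (p!i, is_red p i)) [0..<j]"
  by (simp add: list_eq_iff_nth_eq is_red_def)

lemma is_red_char: "j < length p \<Longrightarrow>
  is_red p j = (\<not> has132 (map (nth p) (filter (is_red p) [0..<j] @ [j])))"
proof -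
  assume j: "j < length p"
  have "is_red p j = red_scan [] p ! j" by (simp add: is_red_def)
  also have "\<dots> = (\<not> has132 (map fst (filter snd (zip (take j p) (red_scan [] p))) @ [p!j]))"
    using red_scan_nth[OF j, of "[]"] by simp
  also have "map fst (filter snd (zip (take j p) (red_scan [] p))) = map (nth p) (filter (is_red p) [0..<j])"
    using j by (simp add: zip_red filter_map comp_def)
  finally show ?thesis by simp
qed

lemma has132_map:
  fixes f :: "nat \<Rightarrow> nat"
  assumes s: "sorted_wrt (<) ks"
  shows "has132 (map f ks) \<longleftrightarrow> (\<exists>a b c. a\<in>set ks \<and> b\<in>set ks \<and> c \<in> set ks \<and> a<b \<and> b<c \<and> f a < f c \<and> f c < f b)"
proof
  assume "has132 (map f ks)"
  then obtain a b c where abc: "a < b" "b < c" "c < length ks" "f (ks!a) < f (ks!c)" "f (ks!c) < f (ks!b)"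
    by (auto simp: has132_def)
  have "ks!a < ks!b" "ks!b < ks!c" using s abc by (auto simp: sorted_wrt_iff_nth_less)
  moreover have "ks!a \<in> set ks" "ks!b \<in> set ks" "ks!c \<in> set ks" using abc by auto
  ultimately show "\<exists>a b c. a\<in>set ks \<and> b\<in>set ks \<and> c \<in> set ks \<and> a<b \<and> b<c \<and> f a < f c \<and> f c < f b"
    using abc by blast
next
  assume "\<exists>a b c. a\<in>set ks \<and> b\<in>set ks \<and> c \<in> set ks \<and> a<b \<and> b<c \<and> f a < f c \<and> f c < f b"
  then obtain a b c where abc: "a\<in>set ks" "b\<in>set ks" "c \<in> set ks" "a<b" "b<c" "f a < f c" "f c < f b" by blast
  obtain ia where ia: "ia < length ks" "ks!ia = a" using abc(1) by (auto simp: in_set_conv_nth)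
  obtain ib where ib: "ib < length ks" "ks!ib = b" using abc(2) by (auto simp: in_set_conv_nth)
  obtain ic where ic: "ic < length ks" "ks!ic = c" using abc(3) by (auto simp: in_set_conv_nth)
  have ord: "\<And>x y. x < length ks \<Longrightarrow> y < length ks \<Longrightarrow> ks!x < ks!y \<Longrightarrow> x < y"
  proof (rule ccontr)
    fix x y assume xy: "x < length ks" "y < length ks" "ks!x < ks!y" "\<not> x < y"
    show False
    proof (cases "x = y")
      case True then show False using xy by simp
    next
      case False
      then have "y < x" using xy by simp
      then have "ks!y < ks!x" using s xy by (simp add: sorted_wrt_iff_nth_less)
      then show False using xy by simp
    qed
  qed
  have "ia < ib" using ord[OF ia(1) ib(1)] ia ib abc by simp
  moreover have "ib < ic" using ord[OF ib(1) ic(1)] ib ic abc by simp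
  ultimately show "has132 (map f ks)" unfolding has132_def using ia ib ic abc
    by (intro exI[of _ ia] exI[of _ ib] exI[of _ ic]) auto
qed

lemma is_red_char2: "j < length p \<Longrightarrow>
  is_red p j = (\<not> (\<exists>a b c. (a = j \<or> (a < j \<and> is_red p a)) \<and> (b = j \<or> (b < j \<and> is_red p b))
    \<and> (c = j \<or> (c < j \<and> is_red p c)) \<and> a<b \<and> b<c \<and> p!a < p!c \<and> p!c < p!b))"
proof -
  assume j: "j < length p"
  have s: "sorted_wrt (<) (filter (is_red p) [0..<j] @ [j])"
    by (auto simp: sorted_wrt_append sorted_wrt_filter)
  have mem: "\<And>x. x \<in> set (filter (is_red p) [0..<j] @ [j]) \<longleftrightarrow> (x = j \<or> (x < j \<and> is_red p x))"
    by auto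
  show ?thesis
    unfolding is_red_char[OF j] map_map[symmetric] has132_map[OF s] mem by simp
qed

lemma R1: "a < b \<Longrightarrow> b < c \<Longrightarrow> c < length p \<Longrightarrow> is_red p a \<Longrightarrow> is_red p b \<Longrightarrow> is_red p c
  \<Longrightarrow> \<not> (p!a < p!c \<and> p!c < p!b)"
proof
  assume h: "a < b" "b < c" "c < length p" "is_red p a" "is_red p b" "is_red p c" "p!a < p!c \<and> p!c < p!b"
  have ex: "\<exists>a' b' c'. (a' = c \<or> (a' < c \<and> is_red p a')) \<and> (b' = c \<or> (b' < c \<and> is_red p b'))
    \<and> (c' = c \<or> (c' < c \<and> is_red p c')) \<and> a'<b' \<and> b'<c' \<and> p!a' < p!c' \<and> p!c' < p!b'"
    apply (rule exI[of _ a], rule exI[of _ b], rule exI[of _ c])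
    using h by simp
  have "is_red p c" by (rule h(6))
  then show False using ex unfolding is_red_char2[OF h(3)] by (rule notE)
qed

lemma R2: "j < length p \<Longrightarrow> \<not> is_red p j \<Longrightarrow>
   \<exists>a b. a < b \<and> b < j \<and> is_red p a \<and> is_red p b \<and> p!a < p!j \<and> p!j < p!b"
proof -
  assume j: "j < length p" and nr: "\<not> is_red p j"
  have "\<exists>a b c. (a = j \<or> (a < j \<and> is_red p a)) \<and> (b = j \<or> (b < j \<and> is_red p b))
    \<and> (c = j \<or> (c < j \<and> is_red p c)) \<and> a<b \<and> b<c \<and> p!a < p!c \<and> p!c < p!b"
    using nr is_red_char2[OF j] by (simp only: not_not)
  then obtain a b c where abc: "a<b" "b<c" "p!a < p!c" "p!c < p!b"
    "(a = j \<or> (a < j \<and> is_red p a))" "(b = j \<or> (b < j \<and> is_red p b))" "(c = j \<or> (c < j \<and> is_red p c))"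
    by blast
  have ab: "a < j" "is_red p a" "b < j" "is_red p b" using abc by auto
  show ?thesis
  proof (cases "c = j")
    case True then show ?thesis using abc ab by blast
  next
    case False
    then have "c < j" "is_red p c" using abc by auto
    then have "\<not> (p!a < p!c \<and> p!c < p!b)" using R1[of a b c p] abc ab j by simp
    then show ?thesis using abc by simp
  qed
qed

lemma lr_min_red: "j < length p \<Longrightarrow> lr_min p j \<Longrightarrow> is_red p j"
proof (rule ccontr)
  assume j: "j < length p" and lm: "lr_min p j" and nr: "\<not> is_red p j"
  obtain a b where "a < b" "b < j" "p!a < p!j" using R2[OF j nr] by blast
  moreover have "p!j < p!a" using lm calculation unfolding lr_min_def by simp
  ultimately show False by simp
qed

lemma letter_A: "j < length p \<Longrightarrow> letter_at p j = A \<longleftrightarrow> lr_min p j"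
proof
  assume j: "j < length p" and la: "letter_at p j = A"
  have r: "is_red p j" and all: "\<forall>i<j. is_red p i \<longrightarrow> p!j < p!i"
    using la unfolding letter_at_def by (simp_all split: if_splits)
  show "lr_min p j" unfolding lr_min_def
  proof (intro allI impI)
    fix i assume i: "i < j"
    show "p!j < p!i"
    proof (cases "is_red p i")
      case True then show ?thesis using all i by blast
    next
      case False
      have "i < length p" using i j by simp
      then obtain a b where "a < b" "b < i" "is_red p a" "p!a < p!i" using R2[of i p] False by blast
      moreover have "p!j < p!a" using all calculation i by simp
      ultimately show ?thesis by simp
    qed
  qed
next
  assume j: "j < length p" and lm: "lr_min p j"
  have r: "is_red p j" using lr_min_red[OF j lm] .
  have all: "\<forall>i<j. is_red p i \<longrightarrow> p!j < p!i" using lm unfolding lr_min_def by simp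
  show "letter_at p j = A" unfolding letter_at_def using r all lm by simp
qed

lemma letter_B: "letter_at p j = B \<Longrightarrow> is_red p j \<and> (\<exists>i<j. is_red p i \<and> \<not> p!j < p!i)"
  unfolding letter_at_def by (simp split: if_splits)

lemma letter_C: "letter_at p j = C \<Longrightarrow> \<not> is_red p j \<and> (\<exists>l. j < l \<and> l < length p \<and> \<not> is_red p l \<and> \<not> p!l < p!j)"
  unfolding letter_at_def by (simp split: if_splits)

theorem lemma4p1:
  fixes p :: "nat list" and i k :: nat
  assumes "is_perm p" and "avoids1324 p"
    and "1 \<le> i" and "1 \<le> k"
    and "i \<le> length (A_positions (w_word p))"
    and "in_CABk (w_word p) (ith_A_from_right (w_word p) i) k"
  shows "k \<le> length (filter (\<lambda>x. x = B) (segment (z_word p) i))"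
proof -
  define n where "n = length p"
  have dist: "distinct p" and setp: "set p = {1..n}" using assms(1) by (auto simp: is_perm_def n_def)
  have vals: "\<And>j. j < n \<Longrightarrow> 1 \<le> p!j \<and> p!j \<le> n"
    using setp n_def by (metis atLeastAtMost_iff nth_mem)
  have inj: "\<And>a b. a < n \<Longrightarrow> b < n \<Longrightarrow> p!a = p!b \<Longrightarrow> a = b"
    using dist n_def by (simp add: nth_eq_iff_index_eq)
  have no1324: "\<And>a b c d. a < b \<Longrightarrow> b < c \<Longrightarrow> c < d \<Longrightarrow> d < n \<Longrightarrow> p!a < p!c \<Longrightarrow> p!c < p!b \<Longrightarrow> p!b < p!d \<Longrightarrow> False"
    using assms(2) n_def unfolding avoids1324_def by blast
  define w where "w = w_word p"
  define z where "z = z_word p"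
  define L where "L = A_positions w"
  define Z where "Z = A_positions z"
  have wlen: "length w = n" by (simp add: w_def w_word_def n_def)
  have w_nth: "\<And>j. j < n \<Longrightarrow> w!j = letter_at p j" by (simp add: w_def w_word_def n_def)
  have L_eq: "L = filter (lr_min p) [0..<n]"
    unfolding L_def A_positions_def wlen
    by (rule filter_cong) (auto simp: w_nth letter_A n_def)
  have Ls: "sorted_wrt (<) L" by (simp add: L_eq sorted_wrt_filter)
  have Lset: "\<And>j. j \<in> set L \<longleftrightarrow> j < n \<and> lr_min p j" by (simp add: L_eq)
  have posnth: "\<And>j. j < n \<Longrightarrow> (THE j'. j' < length p \<and> p!j' = p!j) = j"
    by (rule the_equality) (auto simp: n_def inj)
  have zlen: "length z = n" unfolding z_def z_word_def n_def length_map length_upt by simp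
  have z_nth: "\<And>j. j < n \<Longrightarrow> z!(p!j - 1) = letter_at p j"
  proof -
    fix j assume j: "j < n"
    have "p!j - 1 < n" using vals[OF j] by linarith
    then have "z!(p!j - 1) = letter_at p (THE j'. j' < length p \<and> p!j' = (p!j - 1) + 1)"
      by (simp add: z_def z_word_def n_def del: upt_Suc)
    also have "(p!j - 1) + 1 = p!j" using vals[OF j] by simp
    finally show "z!(p!j - 1) = letter_at p j" using posnth[OF j] by simp
  qed
  define M where "M = map (\<lambda>j. p!j - 1) L"
  have Z_eq: "Z = rev M"
  proof (rule strict_sorted_equal)
    show "sorted_wrt (<) (rev M)"
      unfolding M_def sorted_wrt_rev sorted_wrt_map
    proof (rule sorted_wrt_mono_rel[OF _ Ls])
      fix x y assume "x \<in> set L" "y \<in> set L" "x < y"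
      then show "p!y - 1 < p!x - 1" using Lset vals unfolding lr_min_def
        by (metis diff_less_mono le_trans)
    qed
    show "sorted_wrt (<) Z" by (simp add: Z_def A_positions_def sorted_wrt_filter)
    show "set Z = set (rev M)"
    proof (rule set_eqI)
      fix u
      have "u \<in> set Z \<longleftrightarrow> u < n \<and> z!u = A" by (simp add: Z_def A_positions_def zlen)
      also have "\<dots> \<longleftrightarrow> (\<exists>j<n. lr_min p j \<and> u = p!j - 1)"
      proof
        assume u: "u < n \<and> z!u = A"
        then have "u + 1 \<in> set p" using setp by auto
        then obtain j where j: "j < n" "p!j = u + 1" by (metis in_set_conv_nth n_def)
        then have "z!u = letter_at p j" using z_nth[OF j(1)] by simp
        then show "\<exists>j<n. lr_min p j \<and> u = p!j - 1" using u j letter_A[of j p] n_def by auto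
      next
        assume "\<exists>j<n. lr_min p j \<and> u = p!j - 1"
        then obtain j where j: "j < n" "lr_min p j" "u = p!j - 1" by blast
        then show "u < n \<and> z!u = A" using vals[OF j(1)] z_nth[OF j(1)] letter_A[of j p] n_def by auto
      qed
      finally show "u \<in> set Z \<longleftrightarrow> u \<in> set (rev M)" by (auto simp: M_def Lset)
    qed
  qed
  have lenZ: "length Z = length L" by (simp add: Z_eq M_def)
  define q where "q = L ! (length L - i)"
  have qdef: "ith_A_from_right w i = q" by (simp add: ith_A_from_right_def q_def L_def)
  have cab: "1 \<le> q" "q + k < n" "w!(q-1) = C" "w!q = A" "\<And>t. 1 \<le> t \<Longrightarrow> t \<le> k \<Longrightarrow> w!(q+t) = B"
    using assms(6) unfolding w_def[symmetric] qdef in_CABk_def wlen by auto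
  have iL: "i \<le> length L" using assms(5) by (simp add: L_def w_def)
  have iL2: "i < length L"
  proof (rule ccontr)
    assume "\<not> i < length L"
    then have "i = length L" using iL by simp
    then have q0: "q = L ! 0" by (simp add: q_def)
    have "0 \<in> set L" using Lset cab(2) by (simp add: lr_min_def)
    then obtain x where x: "x < length L" "L!x = 0" by (metis in_set_conv_nth)
    have "L!0 \<le> L!x" using Ls x by (metis le0 le_neq_implies_less order.order_iff_strict sorted_wrt_nth_less)
    then show False using x q0 cab(1) by simp
  qed
  define q' where "q' = L ! (length L - i - 1)"
  have qL: "q \<in> set L" using iL2 assms(3) by (simp add: q_def)
  have q'L: "q' \<in> set L" using iL2 assms(3) by (simp add: q'_def)
  have q'q: "q' < q" unfolding q_def q'_def
    apply (rule sorted_wrt_nth_less[OF Ls]) using iL2 assms(3) by auto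
  define m where "m = p!q"
  define m' where "m' = p!q'"
  have qn: "q < n" and lq: "lr_min p q" using Lset[of q] qL by simp_all
  have q'n: "q' < n" and lq': "lr_min p q'" using Lset[of q'] q'L by simp_all
  have Zi1: "Z!(i-1) = m - 1" using iL2 assms(3)
    by (simp add: Z_eq M_def rev_nth m_def q_def Suc_diff_le)
  have Zi: "Z!i = m' - 1" using iL2 assms(3)
    by (simp add: Z_eq M_def rev_nth m'_def q'_def)
  have seg: "segment z i = take ((m' - 1) - (m - 1)) (drop (m - 1) z)"
    unfolding segment_def Let_def Z_def[symmetric] using Zi1 Zi lenZ iL2 by simp
  have redq: "is_red p q" using lr_min_red lq qn n_def by simp
  have Bt: "\<And>t. 1 \<le> t \<Longrightarrow> t \<le> k \<Longrightarrow> letter_at p (q+t) = B"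
    using cab w_nth by fastforce
  have gt: "\<And>t. 1 \<le> t \<Longrightarrow> t \<le> k \<Longrightarrow> m < p!(q+t)"
  proof -
    fix t show "1 \<le> t \<Longrightarrow> t \<le> k \<Longrightarrow> m < p!(q+t)"
    proof (induction t rule: less_induct)
      case (less t)
      obtain i0 where i0: "i0 < q+t" "is_red p i0" "\<not> p!(q+t) < p!i0"
        using letter_B[OF Bt[OF less.prems]] by blast
      show ?case
      proof (rule ccontr)
        assume "\<not> m < p!(q+t)"
        then have x: "p!(q+t) \<le> m" by simp
        consider "i0 < q" | "i0 = q" | "q < i0" by linarith
        then show False
        proof cases
          case 1 then show ?thesis using lq x i0 unfolding lr_min_def m_def by fastforce
        next
          case 2
          have "p!(q+t) \<noteq> m" using inj[of "q+t" q] less.prems cab(2) qn unfolding m_def by auto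
          then show ?thesis using 2 x i0 m_def by simp
        next
          case 3
          have t': "1 \<le> i0 - q" "i0 - q < t" using 3 i0(1) by auto
          have "m < p!(q + (i0 - q))" using less.IH[OF t'(2) t'(1)] t' less.prems by simp
          then have "m < p!i0" using 3 by simp
          then show ?thesis using x i0 by simp
        qed
      qed
    qed
  qed
  have lt: "\<And>t. 1 \<le> t \<Longrightarrow> t \<le> k \<Longrightarrow> p!(q+t) < m'"
  proof (rule ccontr)
    fix t assume t: "1 \<le> t" "t \<le> k" and nlt: "\<not> p!(q+t) < m'"
    have tn: "q + t < n" using t cab(2) by simp
    have "p!(q+t) \<noteq> m'" using inj[OF tn q'n] q'q unfolding m'_def by auto
    then have mx: "m' < p!(q+t)" using nlt by simp
    have cC: "letter_at p (q-1) = C" using cab w_nth qn by simp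
    obtain l where l: "q - 1 < l" "l < n" "\<not> is_red p l" "\<not> p!l < p!(q-1)"
      using letter_C[OF cC] n_def by auto
    have nrc: "\<not> is_red p (q-1)" using letter_C[OF cC] by simp
    have redq': "is_red p q'" using lr_min_red lq' q'n n_def by simp
    have "q' \<noteq> q - 1" using nrc redq' by auto
    then have q'c: "q' < q - 1" using q'q by linarith
    have lqt: "q + t < l"
    proof (rule ccontr)
      assume "\<not> q + t < l"
      then consider "l = q" | "1 \<le> l - q" "l - q \<le> k" using l(1) t cab(1) by linarith
      then show False
      proof cases
        case 1 then show False using redq l(3) by simp
      next
        case 2
        have "is_red p (q + (l - q))" using letter_B[OF Bt[OF 2]] by simp
        then show False using l(3) 2 by simp
      qed
    qed
    have "q - 1 < n" using qn by simp
    have "l \<noteq> q - 1" using l(1) by simp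
    then have "p!l \<noteq> p!(q-1)" using inj[OF l(2) \<open>q - 1 < n\<close>] by blast
    then have dc: "p!(q-1) < p!l" using l(4) by linarith
    have xc: "\<not> p!(q+t) < p!(q-1)"
    proof
      assume "p!(q+t) < p!(q-1)"
      moreover have "q - 1 < q + t" using cab(1) by simp
      ultimately show False using no1324[of q' "q-1" "q+t" l] q'c lqt l(2) mx dc m'_def by blast
    qed
    have "p!(q+t) \<noteq> p!(q-1)" using inj[OF tn \<open>q - 1 < n\<close>] cab(1) by auto
    then have cx: "p!(q-1) < p!(q+t)" using xc by simp
    obtain a b where ab: "a < b" "b < q - 1" "is_red p a" "is_red p b" "p!a < p!(q-1)" "p!(q-1) < p!b"
      using R2[of "q-1" p] nrc \<open>q - 1 < n\<close> n_def by auto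
    have redx: "is_red p (q+t)" using letter_B[OF Bt[OF t]] by simp
    have bn: "b < n" using ab \<open>q - 1 < n\<close> by simp
    have "p!(q+t) \<noteq> p!b" using inj[OF tn bn] ab by auto
    have bqt: "b < q + t" and q1t: "q - 1 < q + t" using ab cab(1) by auto
    from \<open>p!(q+t) \<noteq> p!b\<close> consider "p!(q+t) < p!b" | "p!b < p!(q+t)" by linarith
    then show False
    proof cases
      case 1
      then show False using R1[of a b "q+t" p] ab redx tn n_def cx bqt by auto
    next
      case 2
      then show False using no1324[of a b "q-1" "q+t"] ab tn cx q1t by auto
    qed
  qed
  define S where "S = segment z i"
  define g where "g = (\<lambda>t. p!(q+t) - m)"
  have sub: "g ` {1..k} \<subseteq> {u. u < length S \<and> S!u = B}"
  proof
    fix u assume "u \<in> g ` {1..k}"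
    then obtain t where t: "1 \<le> t" "t \<le> k" "u = g t" by auto
    have tn: "q + t < n" using t cab(2) by simp
    have m'n: "m' \<le> n" using vals[OF q'n] m'_def by simp
    have m1: "1 \<le> m" using vals[OF qn] m_def by simp
    have a: "m < p!(q+t)" "p!(q+t) < m'" using gt[OF t(1,2)] lt[OF t(1,2)] by auto
    have len: "length S = min ((m' - 1) - (m - 1)) (n - (m - 1))" by (simp add: S_def seg zlen min.commute)
    have ul: "u < length S" using a m'n m1 t(3) unfolding len g_def by auto
    have mz: "m - 1 \<le> length z" using vals[OF qn] zlen unfolding m_def by linarith
    have "S!u = z!((m - 1) + u)" using ul mz by (simp add: S_def seg nth_drop)
    also have "(m - 1) + u = p!(q+t) - 1" using a m1 t(3) g_def by simp
    also have "z!(p!(q+t) - 1) = B" using z_nth[OF tn] Bt[OF t(1,2)] by simp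
    finally show "u \<in> {u. u < length S \<and> S!u = B}" using ul by simp
  qed
  have injg: "inj_on g {1..k}"
  proof
    fix x y assume x: "x \<in> {1..k}" and y: "y \<in> {1..k}" and "g x = g y"
    then have "p!(q+x) = p!(q+y)" using gt[of x] gt[of y] g_def by auto
    then show "x = y" using inj[of "q+x" "q+y"] x y cab(2) by auto
  qed
  have "k = card (g ` {1..k})" using card_image[OF injg] by simp
  also have "\<dots> \<le> card {u. u < length S \<and> S!u = B}" by (rule card_mono[OF _ sub]) simp
  also have "\<dots> = length (filter (\<lambda>x. x = B) S)" by (simp add: length_filter_conv_card)
  finally show ?thesis by (simp add: S_def z_def)
qed

end
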